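(* For any proper, lsc, convex $f:\mathbb R^n\to\overline{\mathbb R}$, $f$ is B-smooth if and only if $f=\overleftarrow{\mathrm{env}}_\phi g$ for some proper function $g:\mathbb R^n\to\overline{\mathbb R}$.
   Context: Standing assumption: $\phi:\mathbb R^n\to\mathbb R$ is convex, finite-valued, differentiable and strictly convex (Legendre with full domain), super-coercive. $D_\phi(x,y)=\phi(x)-\phi(y)-\langle\nabla\phi(y),x-y\rangle$, and $\overleftarrow{\mathrm{env}}_\phi g(x)=\inf_y\{g(y)+D_\phi(x,y)\}$. $f$ is B-weakly convex if $f+\phi$ is convex, and B-smooth if both $f$ and $-f$ are proper and B-weakly convex. *)

theory Defs
  imports "HOL-Analysis.Analysis"
begin

definition proper_fun :: "('a \<Rightarrow> ereal) \<Rightarrow> bool" where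
  "proper_fun f \<longleftrightarrow> (\<forall>x. f x \<noteq> -\<infinity>) \<and> (\<exists>x. f x \<noteq> \<infinity>)"

definition econvex :: "('a::real_vector \<Rightarrow> ereal) \<Rightarrow> bool" where
  "econvex f \<longleftrightarrow> convex {(x, t::real). f x \<le> ereal t}"

definition lsc_fun :: "('a::topological_space \<Rightarrow> ereal) \<Rightarrow> bool" where
  "lsc_fun f \<longleftrightarrow> (\<forall>x. f x \<le> Liminf (at x) f)"

definition strictly_convex :: "('a::real_vector \<Rightarrow> real) \<Rightarrow> bool" where
  "strictly_convex \<phi> \<longleftrightarrow>
     (\<forall>x y t. x \<noteq> y \<longrightarrow> 0 < t \<longrightarrow> t < 1 \<longrightarrow>
        \<phi> ((1 - t) *\<^sub>R x + t *\<^sub>R y) < (1 - t) * \<phi> x + t * \<phi> y)"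

definition super_coercive :: "('a::real_normed_vector \<Rightarrow> real) \<Rightarrow> bool" where
  "super_coercive \<phi> \<longleftrightarrow> filterlim (\<lambda>x. \<phi> x / norm x) at_top at_infinity"

definition legendre_full :: "('a::euclidean_space \<Rightarrow> real) \<Rightarrow> bool" where
  "legendre_full \<phi> \<longleftrightarrow> convex_on UNIV \<phi> \<and> (\<forall>x. \<phi> differentiable (at x))
     \<and> strictly_convex \<phi> \<and> super_coercive \<phi>"

definition bregman :: "('a::euclidean_space \<Rightarrow> real) \<Rightarrow> 'a \<Rightarrow> 'a \<Rightarrow> real" where
  "bregman \<phi> x y = \<phi> x - \<phi> y - frechet_derivative \<phi> (at y) (x - y)"

definition left_env :: "('a::euclidean_space \<Rightarrow> real) \<Rightarrow> ('a \<Rightarrow> ereal) \<Rightarrow> 'a \<Rightarrow> ereal" where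
  "left_env \<phi> g x = (INF y. g y + ereal (bregman \<phi> x y))"

definition B_weakly_convex :: "('a::euclidean_space \<Rightarrow> real) \<Rightarrow> ('a \<Rightarrow> ereal) \<Rightarrow> bool" where
  "B_weakly_convex \<phi> f \<longleftrightarrow> econvex (\<lambda>x. f x + ereal (\<phi> x))"

definition B_smooth :: "('a::euclidean_space \<Rightarrow> real) \<Rightarrow> ('a \<Rightarrow> ereal) \<Rightarrow> bool" where
  "B_smooth \<phi> f \<longleftrightarrow> proper_fun f \<and> proper_fun (\<lambda>x. - f x)
     \<and> B_weakly_convex \<phi> f \<and> B_weakly_convex \<phi> (\<lambda>x. - f x)"

end

theory Submission
  imports Defs
begin

lemma econvex_real:
  fixes F :: "'a::euclidean_space \<Rightarrow> real"
  shows "econvex (\<lambda>x. ereal (F x)) \<longleftrightarrow> convex_on UNIV F"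
proof -
  have "{(x, t::real). ereal (F x) \<le> ereal t} = epigraph UNIV F"
    by (auto simp: epigraph_def)
  then show ?thesis unfolding econvex_def by (simp add: convex_epigraph)
qed

lemma subgrad:
  fixes h :: "'a::euclidean_space \<Rightarrow> real"
  assumes "convex_on UNIV h"
  shows "\<exists>v. \<forall>z. h x + v \<bullet> (z - x) \<le> h z"
proof -
  let ?E = "epigraph UNIV h"
  have cE: "convex ?E" using convex_epigraph assms by blast
  have mem: "(x, h x) \<in> ?E" by (simp add: epigraph_def)
  have notin: "(x, h x) \<notin> rel_interior ?E"
  proof
    assume "(x, h x) \<in> rel_interior ?E"
    then obtain e where e: "e>0" "ball (x, h x) e \<inter> affine hull ?E \<subseteq> ?E"
      by (auto simp: mem_rel_interior_ball)
    have p1: "(x, h x + 1) \<in> ?E" by (simp add: epigraph_def)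
    have eq: "(x, h x - e/2) = (1 + e/2) *\<^sub>R (x, h x) + (- e/2) *\<^sub>R (x, h x + 1)"
    proof -
      have "(1 + e/2) *\<^sub>R x + (- e/2) *\<^sub>R x = ((1 + e/2) + (- e/2)) *\<^sub>R x"
        by (rule scaleR_add_left[symmetric])
      then have "(1 + e/2) *\<^sub>R x + (- e/2) *\<^sub>R x = x" by simp
      moreover have "(1 + e/2) * h x + (- e/2) * (h x + 1) = h x - e/2"
        by (simp add: algebra_simps)
      moreover have "(1 + e/2) *\<^sub>R (x, h x) + (- e/2) *\<^sub>R (x, h x + 1) = ((1 + e/2) *\<^sub>R x + (- e/2) *\<^sub>R x, (1 + e/2) * h x + (- e/2) * (h x + 1))"
        by (simp only: scaleR_Pair add_Pair real_scaleR_def)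
      ultimately show ?thesis by (simp only:)
    qed
    have "(x, h x - e/2) \<in> affine hull ?E"
      unfolding eq
      by (rule mem_affine[OF affine_affine_hull]) (auto intro: hull_inc mem p1)
    moreover have "(x, h x - e/2) \<in> ball (x, h x) e"
    proof -
      have "dist (x, h x) (x, h x - e/2) = sqrt ((dist x x)\<^sup>2 + (dist (h x) (h x - e/2))\<^sup>2)"
        by (rule dist_Pair_Pair)
      also have "\<dots> = sqrt ((e/2)\<^sup>2)" using e(1) by (simp add: dist_real_def)
      also have "\<dots> = e/2" using e(1) by simp
      finally show ?thesis using e(1) by (simp add: mem_ball)
    qed
    ultimately have "(x, h x - e/2) \<in> ball (x, h x) e \<inter> affine hull ?E" by (rule IntI[rotated])
    then have "(x, h x - e/2) \<in> ?E" using e(2) by (rule subsetD[rotated])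
    then have "h x \<le> h x - e/2" by (simp add: epigraph_def)
    then show False using e(1) by simp
  qed
  obtain a where a: "a \<noteq> 0" "\<And>y. y \<in> ?E \<Longrightarrow> a \<bullet> (x, h x) \<le> a \<bullet> y"
     "\<And>y. y \<in> rel_interior ?E \<Longrightarrow> a \<bullet> (x, h x) < a \<bullet> y"
    by (rule supporting_hyperplane_rel_boundary[OF cE mem notin], rule that, assumption+)
  obtain a1 a2 where a12: "a = (a1, a2)" by (cases a)
  have key: "a1 \<bullet> x + a2 * h x \<le> a1 \<bullet> z + a2 * t" if "h z \<le> t" for z t
    using a(2)[of "(z,t)"] that by (simp add: epigraph_def a12 inner_Pair)
  have "a2 * h x \<le> a2 * (h x + 1)" using key[of x "h x + 1"] by simp
  then have a2ge: "a2 \<ge> 0" by (simp add: algebra_simps)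
  have "a2 \<noteq> 0"
  proof
    assume "a2 = 0"
    then have "a1 \<bullet> x \<le> a1 \<bullet> (x - a1)" using key[of "x - a1" "h (x - a1)"] by simp
    then have "a1 \<bullet> a1 \<le> 0" by (simp add: inner_diff_right)
    then have "a1 = 0" by (metis inner_eq_zero_iff inner_ge_zero order_antisym)
    with \<open>a2 = 0\<close> a12 a(1) show False by (simp add: zero_prod_def)
  qed
  with a2ge have a2: "a2 > 0" by simp
  show ?thesis
  proof (intro exI allI)
    fix z
    have k: "a1 \<bullet> x + a2 * h x \<le> a1 \<bullet> z + a2 * h z" using key[of z "h z"] by simp
    have "(- (1/a2) *\<^sub>R a1) \<bullet> (z - x) = (a1 \<bullet> x - a1 \<bullet> z) / a2"
      by (simp add: inner_diff_right field_simps diff_divide_distrib)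
    also have "\<dots> \<le> h z - h x" using k a2 by (simp add: field_simps)
    finally show "h x + (- (1/a2) *\<^sub>R a1) \<bullet> (z - x) \<le> h z" by simp
  qed
qed

lemma grad_surj:
  fixes \<phi> :: "'a::euclidean_space \<Rightarrow> real"
  assumes "legendre_full \<phi>"
  shows "\<exists>y. \<forall>d. frechet_derivative \<phi> (at y) d = v \<bullet> d"
proof -
  have diff: "\<And>x. \<phi> differentiable (at x)" and sc: "super_coercive \<phi>"
    using assms by (auto simp: legendre_full_def)
  define \<psi> where "\<psi> z = \<phi> z - v \<bullet> z" for z
  have cont: "continuous_on UNIV \<psi>"
    unfolding \<psi>_def
    by (intro continuous_on_diff continuous_at_imp_continuous_on ballI
        differentiable_imp_continuous_within diff continuous_intros)
  have "eventually (\<lambda>z. norm v + \<bar>\<phi> 0\<bar> + 1 \<le> \<phi> z / norm z) at_infinity"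
    using sc unfolding super_coercive_def filterlim_at_top by blast
  then obtain b where b: "\<And>z. norm z \<ge> b \<Longrightarrow> norm v + \<bar>\<phi> 0\<bar> + 1 \<le> \<phi> z / norm z"
    unfolding eventually_at_infinity by blast
  define R where "R = max b 1"
  have far: "\<psi> 0 \<le> \<psi> z" if "norm z \<ge> R" for z
  proof -
    have nz: "norm z \<ge> 1" "norm z \<ge> b" using that by (auto simp: R_def)
    have "(norm v + \<bar>\<phi> 0\<bar> + 1) * norm z \<le> \<phi> z"
    proof -
      have "norm z > 0" using nz(1) by linarith
      then show ?thesis using b[OF nz(2)] by (simp add: pos_le_divide_eq)
    qed
    moreover have "(\<bar>\<phi> 0\<bar> + 1) * 1 \<le> (\<bar>\<phi> 0\<bar> + 1) * norm z"
      using nz(1) by (intro mult_left_mono) auto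
    moreover have "v \<bullet> z \<le> norm v * norm z" by (rule norm_cauchy_schwarz)
    ultimately show ?thesis unfolding \<psi>_def by (simp add: algebra_simps)
  qed
  have "\<exists>x\<in>cball 0 R. \<forall>y\<in>cball 0 R. \<psi> x \<le> \<psi> y"
  proof (rule continuous_attains_inf)
    show "compact (cball (0::'a) R)" by simp
    show "cball (0::'a) R \<noteq> {}" by (simp add: R_def)
    show "continuous_on (cball 0 R) \<psi>" using cont by (rule continuous_on_subset) simp
  qed
  then obtain y where y: "y \<in> cball 0 R" "\<And>z. z \<in> cball 0 R \<Longrightarrow> \<psi> y \<le> \<psi> z"
    by blast
  have ymin: "\<psi> y \<le> \<psi> z" for z
  proof (cases "norm z \<le> R")
    case True then show ?thesis using y(2) by simp
  next
    case False
    then have "\<psi> 0 \<le> \<psi> z" using far by simp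
    moreover have "\<psi> y \<le> \<psi> 0" using y(2)[of 0] by (simp add: R_def)
    ultimately show ?thesis by simp
  qed
  have der: "(\<psi> has_derivative (\<lambda>d. frechet_derivative \<phi> (at y) d - v \<bullet> d)) (at y)"
    unfolding \<psi>_def
    by (intro has_derivative_diff iffD1[OF frechet_derivative_works diff] derivative_intros)
  have "(\<lambda>d. frechet_derivative \<phi> (at y) d - v \<bullet> d) = (\<lambda>h. 0)"
    by (rule has_derivative_local_min[OF der]) (simp add: ymin)
  then show ?thesis by (auto simp: fun_eq_iff)
qed

lemma bregman_lin:
  fixes \<phi> :: "'a::euclidean_space \<Rightarrow> real"
  assumes "legendre_full \<phi>"
  shows "linear (frechet_derivative \<phi> (at y))"
proof -
  have "\<phi> differentiable (at y)" using assms by (auto simp: legendre_full_def)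
  then have "(\<phi> has_derivative frechet_derivative \<phi> (at y)) (at y)"
    by (simp add: frechet_derivative_works[symmetric])
  then show ?thesis
    using has_derivative_bounded_linear bounded_linear.linear by blast
qed

theorem mainTheorem6:
  fixes \<phi> :: "'a::euclidean_space \<Rightarrow> real" and f :: "'a \<Rightarrow> ereal"
  assumes "legendre_full \<phi>"
    and "proper_fun f" and "lsc_fun f" and "econvex f"
  shows "B_smooth \<phi> f \<longleftrightarrow> (\<exists>g :: 'a \<Rightarrow> ereal. proper_fun g \<and> f = left_env \<phi> g)"
proof
  assume B: "B_smooth \<phi> f"
  define fr where "fr x = real_of_ereal (f x)" for x
  have fe: "f x = ereal (fr x)" for x
  proof -
    have "f x \<noteq> -\<infinity>" "- f x \<noteq> -\<infinity>"
      using B unfolding B_smooth_def proper_fun_def by auto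
    then show ?thesis unfolding fr_def by (cases "f x") auto
  qed
  have "econvex (\<lambda>x. - f x + ereal (\<phi> x))"
    using B unfolding B_smooth_def B_weakly_convex_def by blast
  moreover have "(\<lambda>x. - f x + ereal (\<phi> x)) = (\<lambda>x. ereal (\<phi> x - fr x))"
    by (simp add: fe fun_eq_iff)
  ultimately have hconv: "convex_on UNIV (\<lambda>x. \<phi> x - fr x)"
    using econvex_real by metis
  define L where "L y = frechet_derivative \<phi> (at y)" for y
  have brg: "bregman \<phi> x y = \<phi> x - \<phi> y - L y (x - y)" for x y
    by (simp add: bregman_def L_def)
  have claimA: "\<exists>y. \<forall>z. fr z - bregman \<phi> z y \<le> fr x - bregman \<phi> x y" for x
  proof -
    obtain v where v: "\<And>z. (\<phi> x - fr x) + v \<bullet> (z - x) \<le> \<phi> z - fr z"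
      using subgrad[OF hconv, of x] by blast
    obtain y where y: "\<And>d. L y d = v \<bullet> d"
      using grad_surj[OF assms(1), of v] unfolding L_def by blast
    show ?thesis
    proof (intro exI allI)
      fix z
      have "v \<bullet> (z - y) - v \<bullet> (x - y) = v \<bullet> (z - x)"
        by (simp add: inner_diff_right)
      then show "fr z - bregman \<phi> z y \<le> fr x - bregman \<phi> x y"
        using v[of z] unfolding brg y by linarith
    qed
  qed
  define g where "g y = (SUP x. f x - ereal (bregman \<phi> x y))" for y
  have gup: "f x - ereal (bregman \<phi> x y) \<le> g y" for x y
    unfolding g_def by (rule SUP_upper) simp
  have gex: "\<exists>y. g y = ereal (fr x - bregman \<phi> x y)" for x
  proof -
    obtain y where y: "\<And>z. fr z - bregman \<phi> z y \<le> fr x - bregman \<phi> x y"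
      using claimA by blast
    have "g y \<le> ereal (fr x - bregman \<phi> x y)"
      unfolding g_def by (rule SUP_least) (simp add: fe y)
    moreover have "ereal (fr x - bregman \<phi> x y) \<le> g y"
      using gup[of x y] by (simp add: fe)
    ultimately show ?thesis by (intro exI[of _ y]) simp
  qed
  have "proper_fun g"
    unfolding proper_fun_def
  proof
    show "\<forall>y. g y \<noteq> -\<infinity>"
    proof
      fix y
      have "ereal (fr y - bregman \<phi> y y) \<le> g y" using gup[of y y] by (simp add: fe)
      then show "g y \<noteq> -\<infinity>" by auto
    qed
    obtain y where "g y = ereal (fr 0 - bregman \<phi> 0 y)" using gex by blast
    then show "\<exists>y. g y \<noteq> \<infinity>" by (intro exI[of _ y]) simp
  qed
  moreover have "f = left_env \<phi> g"
  proof
    fix x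
    have "f x \<le> left_env \<phi> g x"
      unfolding left_env_def
    proof (rule INF_greatest)
      fix y
      have "ereal (fr x - bregman \<phi> x y) \<le> g y" using gup[of x y] by (simp add: fe)
      then have "ereal (fr x - bregman \<phi> x y) + ereal (bregman \<phi> x y) \<le> g y + ereal (bregman \<phi> x y)"
        by (rule add_right_mono)
      then show "f x \<le> g y + ereal (bregman \<phi> x y)" by (simp add: fe)
    qed
    moreover have "left_env \<phi> g x \<le> f x"
    proof -
      obtain y where y: "g y = ereal (fr x - bregman \<phi> x y)" using gex by blast
      have "left_env \<phi> g x \<le> g y + ereal (bregman \<phi> x y)"
        unfolding left_env_def by (rule INF_lower) simp
      then show ?thesis by (simp add: y fe)
    qed
    ultimately show "f x = left_env \<phi> g x" by simp
  qed
  ultimately show "\<exists>g. proper_fun g \<and> f = left_env \<phi> g" by blast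
next
  assume "\<exists>g. proper_fun g \<and> f = left_env \<phi> g"
  then obtain g where gp: "proper_fun g" and fg: "f = left_env \<phi> g" by blast
  obtain y0 where y0: "g y0 \<noteq> \<infinity>" using gp unfolding proper_fun_def by blast
  have gnm: "g y \<noteq> -\<infinity>" for y using gp unfolding proper_fun_def by blast
  have fle: "f x \<le> g y + ereal (bregman \<phi> x y)" for x y
    unfolding fg left_env_def by (rule INF_lower) simp
  define fr where "fr x = real_of_ereal (f x)" for x
  have fe: "f x = ereal (fr x)" for x
  proof -
    have "f x \<noteq> -\<infinity>" using assms(2) unfolding proper_fun_def by auto
    moreover have "f x \<noteq> \<infinity>"
    proof
      assume "f x = \<infinity>"
      then have "\<infinity> \<le> g y0 + ereal (bregman \<phi> x y0)" using fle[of x y0] by simp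
      with y0 gnm[of y0] show False by (cases "g y0") auto
    qed
    ultimately show ?thesis unfolding fr_def by (cases "f x") auto
  qed
  have frconv: "convex_on UNIV fr"
    using assms(4) econvex_real[of fr] by (simp add: fe[abs_def])
  have phconv: "convex_on UNIV \<phi>" using assms(1) by (simp add: legendre_full_def)
  define L where "L y = frechet_derivative \<phi> (at y)" for y
  have brg: "bregman \<phi> x y = \<phi> x - \<phi> y - L y (x - y)" for x y
    by (simp add: bregman_def L_def)
  have lin: "linear (L y)" for y unfolding L_def by (rule bregman_lin[OF assms(1)])
  have hconv: "convex_on UNIV (\<lambda>x. \<phi> x - fr x)"
    unfolding convex_on_def
  proof (intro conjI convex_UNIV ballI allI impI)
    fix x1 x2 :: 'a and u v :: real
    assume uv: "0 \<le> u" "0 \<le> v" "u + v = 1"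
    define x where "x = u *\<^sub>R x1 + v *\<^sub>R x2"
    define R where "R = u * (\<phi> x1 - fr x1) + v * (\<phi> x2 - fr x2)"
    have "ereal (\<phi> x - R) \<le> f x"
      unfolding fg left_env_def
    proof (rule INF_greatest)
      fix y
      show "ereal (\<phi> x - R) \<le> g y + ereal (bregman \<phi> x y)"
      proof (cases "g y")
        case PInf then show ?thesis by simp
      next
        case MInf then show ?thesis using gnm by simp
      next
        case (real c)
        have h1: "fr x1 \<le> c + bregman \<phi> x1 y" using fle[of x1 y] by (simp add: fe real)
        have h2: "fr x2 \<le> c + bregman \<phi> x2 y" using fle[of x2 y] by (simp add: fe real)
        have "u *\<^sub>R (x1 - y) + v *\<^sub>R (x2 - y) = x - (u + v) *\<^sub>R y"
          unfolding x_def by (simp add: algebra_simps)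
        then have "x - y = u *\<^sub>R (x1 - y) + v *\<^sub>R (x2 - y)"
          using uv(3) by simp
        then have Lx: "L y (x - y) = u * L y (x1 - y) + v * L y (x2 - y)"
          using lin[of y] by (simp add: linear_add linear_scale)
        have m1: "u * fr x1 \<le> u * (c + bregman \<phi> x1 y)" using h1 uv by (intro mult_left_mono)
        have m2: "v * fr x2 \<le> v * (c + bregman \<phi> x2 y)" using h2 uv by (intro mult_left_mono)
        have "\<phi> x - R \<le> c + bregman \<phi> x y"
        proof -
          have "u * c + v * c = c" "u * \<phi> y + v * \<phi> y = \<phi> y"
            using uv(3) by (simp_all add: distrib_right[symmetric])
          then show ?thesis using m1 m2 unfolding R_def brg Lx by (simp add: algebra_simps)
        qed
        then show ?thesis by (simp add: real)
      qed
    qed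
    then have "\<phi> x - fr x \<le> R" by (simp add: fe)
    then show "\<phi> (u *\<^sub>R x1 + v *\<^sub>R x2) - fr (u *\<^sub>R x1 + v *\<^sub>R x2)
        \<le> u * (\<phi> x1 - fr x1) + v * (\<phi> x2 - fr x2)"
      unfolding x_def R_def .
  qed
  have "proper_fun (\<lambda>x. - f x)"
    unfolding proper_fun_def by (simp add: fe)
  moreover have "B_weakly_convex \<phi> f"
  proof -
    have "convex_on UNIV (\<lambda>x. fr x + \<phi> x)" using frconv phconv by (rule convex_on_add)
    then show ?thesis unfolding B_weakly_convex_def using econvex_real[of "\<lambda>x. fr x + \<phi> x"]
      by (simp add: fe)
  qed
  moreover have "B_weakly_convex \<phi> (\<lambda>x. - f x)"
    unfolding B_weakly_convex_def using econvex_real[of "\<lambda>x. \<phi> x - fr x"] hconv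
    by (simp add: fe)
  ultimately show "B_smooth \<phi> f" using assms(2) by (simp add: B_smooth_def)
qed

end
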